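(* Let $\mathcal I=\{\emptyset\}\otimes\mathrm{Fin}$. (1) Every Sierpiński set (as a subspace of $\mathbb R$) belongs to the classes $(\mathcal I\text{-p},\mathcal I\text{-}\sigma\text{-u})$, $(\mathcal I\text{-p},\mathcal I\text{-qn})$ and $(\mathcal I\text{-qn},\mathcal I\text{-}\sigma\text{-u})$. (2) It is consistent with ZFC (e.g. it holds under the Continuum Hypothesis) that there exists an uncountable subspace of $\mathbb R$ belonging to the classes $(\mathcal I\text{-p},\mathcal I\text{-}\sigma\text{-u})$, $(\mathcal I\text{-p},\mathcal I\text{-qn})$ and $(\mathcal I\text{-qn},\mathcal I\text{-}\sigma\text{-u})$.
   Context: $\{\emptyset\}\otimes\mathrm{Fin}=\{A\subseteq\omega\times\omega:\{y:(x,y)\in A\}\text{ is finite for every }x\in\omega\}$, an ideal on the countable set $\omega\times\omega$ (an ideal on a countably infinite set $S$ is a family of subsets of $S$ closed under finite unions and subsets, containing all finite sets, not containing $S$); all notions below for ideals on $\omega$ are used for it via indexing sequences by $\omega\times\omega$ (equivalently via a bijection with $\omega$). A real sequence $(a_n)$ is $\mathcal I$-convergent to $0$ if $\{n:|a_n|\ge\varepsilon\}\in\mathcal I$ for all $\varepsilon>0$. For a sequence $(f_n)$ of real functions on a set $X$: $\mathcal I$-p means $(f_n(x))$ is $\mathcal I$-convergent to $0$ for each $x$; $\mathcal I$-u means $\{n:\exists x\in X\,(|f_n(x)|\ge\varepsilon)\}\in\mathcal I$ for each $\varepsilon>0$; $\mathcal I$-$\sigma$-u means $X=\bigcup_{k\in\omega}X_k$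 with $(f_n\restriction X_k)$ $\mathcal I$-u convergent to $0$ for each $k$; $\mathcal I$-qn means there is a sequence $(\varepsilon_n)$ of positive reals $\mathcal I$-convergent to $0$ with $\{n:|f_n(x)|\ge\varepsilon_n\}\in\mathcal I$ for each $x$. $\mathcal C(X)$ = continuous real functions on $X$. Normal space = Hausdorff space in which disjoint closed sets have disjoint open neighbourhoods. $(\alpha,\beta)$ is the class of normal spaces $X$ such that for all sequences $(f_n)$ in $\mathcal C(X)$, $f_n\to0$ in sense $\alpha$ iff in sense $\beta$. A Sierpiński set is an uncountable $S\subseteq\mathbb R$ such that $S\cap N$ is countable for every Lebesgue null set $N\subseteq\mathbb R$. *)

theory Defs
  imports "HOL-Analysis.Analysis" "HOL-Library.Equipollence"
begin

definition emptyFin :: "(nat \<times> nat) set set" where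
  "emptyFin = {A. \<forall>x. finite {y. (x, y) \<in> A}}"

definition Iconv0 :: "'i set set \<Rightarrow> ('i \<Rightarrow> real) \<Rightarrow> bool" where
  "Iconv0 I a \<longleftrightarrow> (\<forall>\<epsilon>>0. {n. \<bar>a n\<bar> \<ge> \<epsilon>} \<in> I)"

definition I_p :: "'i set set \<Rightarrow> 'a set \<Rightarrow> ('i \<Rightarrow> 'a \<Rightarrow> real) \<Rightarrow> bool" where
  "I_p I X f \<longleftrightarrow> (\<forall>x\<in>X. Iconv0 I (\<lambda>n. f n x))"

definition I_u :: "'i set set \<Rightarrow> 'a set \<Rightarrow> ('i \<Rightarrow> 'a \<Rightarrow> real) \<Rightarrow> bool" where
  "I_u I X f \<longleftrightarrow> (\<forall>\<epsilon>>0. {n. \<exists>x\<in>X. \<bar>f n x\<bar> \<ge> \<epsilon>} \<in> I)"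

definition I_sigma_u :: "'i set set \<Rightarrow> 'a set \<Rightarrow> ('i \<Rightarrow> 'a \<Rightarrow> real) \<Rightarrow> bool" where
  "I_sigma_u I X f \<longleftrightarrow> (\<exists>Xk :: nat \<Rightarrow> 'a set. X = (\<Union>k. Xk k) \<and> (\<forall>k. I_u I (Xk k) f))"

definition I_qn :: "'i set set \<Rightarrow> 'a set \<Rightarrow> ('i \<Rightarrow> 'a \<Rightarrow> real) \<Rightarrow> bool" where
  "I_qn I X f \<longleftrightarrow> (\<exists>e :: 'i \<Rightarrow> real. (\<forall>n. e n > 0) \<and> Iconv0 I e \<and>
                       (\<forall>x\<in>X. {n. \<bar>f n x\<bar> \<ge> e n} \<in> I))"

definition in_class :: "real set \<Rightarrow> ('i set set \<Rightarrow> real set \<Rightarrow> ('i \<Rightarrow> real \<Rightarrow> real) \<Rightarrow> bool)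
     \<Rightarrow> ('i set set \<Rightarrow> real set \<Rightarrow> ('i \<Rightarrow> real \<Rightarrow> real) \<Rightarrow> bool) \<Rightarrow> 'i set set \<Rightarrow> bool" where
  "in_class X \<alpha> \<beta> I \<longleftrightarrow>
     Hausdorff_space (subtopology euclideanreal X) \<and> normal_space (subtopology euclideanreal X) \<and>
     (\<forall>f :: 'i \<Rightarrow> real \<Rightarrow> real.
        (\<forall>n. continuous_map (subtopology euclideanreal X) euclideanreal (f n)) \<longrightarrow>
        (\<alpha> I X f \<longleftrightarrow> \<beta> I X f))"

definition sierpinski_set :: "real set \<Rightarrow> bool" where
  "sierpinski_set S \<longleftrightarrow> uncountable S \<and> (\<forall>N \<in> null_sets lebesgue. countable (S \<inter> N))"

definition CH :: bool where
  "CH \<longleftrightarrow> (\<forall>A :: real set. uncountable A \<longrightarrow> A \<approx> (UNIV :: real set))"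

end

theory Submission
  imports Defs
begin







lemma emptyFin_iff: "A \<in> emptyFin \<longleftrightarrow> (\<forall>k. finite {m. (k, m) \<in> A})"
  by (simp add: emptyFin_def)

lemma emptyFin_mono: "B \<in> emptyFin \<Longrightarrow> A \<subseteq> B \<Longrightarrow> A \<in> emptyFin"
  unfolding emptyFin_iff by (metis (mono_tags, lifting) finite_subset mem_Collect_eq subsetD subsetI)

lemma emptyFin_Un: "A \<in> emptyFin \<Longrightarrow> B \<in> emptyFin \<Longrightarrow> A \<union> B \<in> emptyFin"
proof -
  assume a: "A \<in> emptyFin" "B \<in> emptyFin"
  have "{m. (k, m) \<in> A \<union> B} = {m. (k, m) \<in> A} \<union> {m. (k, m) \<in> B}" for k by auto
  then show ?thesis using a unfolding emptyFin_iff by auto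
qed

lemma sigma_u_imp_p: "I_sigma_u emptyFin X f \<Longrightarrow> I_p emptyFin X f"
proof -
  assume "I_sigma_u emptyFin X f"
  then obtain Xk :: "nat \<Rightarrow> _" where X: "X = (\<Union>k. Xk k)" and u: "\<And>k. I_u emptyFin (Xk k) f"
    unfolding I_sigma_u_def by blast
  show ?thesis unfolding I_p_def Iconv0_def
  proof (intro ballI allI impI)
    fix x and \<epsilon> :: real
    assume x: "x \<in> X" and e: "0 < \<epsilon>"
    from x X obtain k where "x \<in> Xk k" by auto
    then have "{n. \<epsilon> \<le> \<bar>f n x\<bar>} \<subseteq> {n. \<exists>x\<in>Xk k. \<epsilon> \<le> \<bar>f n x\<bar>}" by auto
    moreover have "{n. \<exists>x\<in>Xk k. \<epsilon> \<le> \<bar>f n x\<bar>} \<in> emptyFin" using u[of k] e unfolding I_u_def by blast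
    ultimately show "{n. \<epsilon> \<le> \<bar>f n x\<bar>} \<in> emptyFin" using emptyFin_mono by blast
  qed
qed

lemma qn_imp_p: "I_qn emptyFin X f \<Longrightarrow> I_p emptyFin X f"
  unfolding I_qn_def I_p_def Iconv0_def
proof (intro ballI allI impI)
  fix x and \<epsilon> :: real
  assume a: "\<exists>e. (\<forall>n. 0 < e n) \<and> (\<forall>\<epsilon>>0. {n. \<epsilon> \<le> \<bar>e n\<bar>} \<in> emptyFin) \<and> (\<forall>x\<in>X. {n. e n \<le> \<bar>f n x\<bar>} \<in> emptyFin)"
    and x: "x \<in> X" and ep: "0 < \<epsilon>"
  then obtain e where e: "\<forall>n. 0 < e n" "\<forall>\<epsilon>>0. {n. \<epsilon> \<le> \<bar>e n\<bar>} \<in> emptyFin" "\<forall>x\<in>X. {n. e n \<le> \<bar>f n x\<bar>} \<in> emptyFin"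
    by blast
  have "{n. \<epsilon> \<le> \<bar>f n x\<bar>} \<subseteq> {n. e n \<le> \<bar>f n x\<bar>} \<union> {n. \<epsilon> \<le> \<bar>e n\<bar>}" by auto
  then show "{n. \<epsilon> \<le> \<bar>f n x\<bar>} \<in> emptyFin" using e x ep emptyFin_mono emptyFin_Un by meson
qed

lemma diag:
  fixes N :: "nat \<Rightarrow> nat \<Rightarrow> nat"
  shows "\<exists>e::nat\<Rightarrow>real. (\<forall>m. e m > 0) \<and> (\<forall>\<epsilon>>0. finite {m. e m \<ge> \<epsilon>}) \<and>
     (\<forall>j. finite {m. \<not>(\<exists>i. N j i \<le> m \<and> 1/(real i+1) \<le> e m)})"
proof -
  define Sm where "Sm m = {i. i < m \<and> (\<forall>j\<le>i. N j i \<le> m)}" for m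
  define g where "g m = Max (insert 0 (Sm m))" for m
  define e where "e m = 1 / (real (g m) + 1)" for m
  define B where "B i = Suc i + (\<Sum>j\<le>i. N j i)" for i
  have finS: "finite (Sm m)" for m unfolding Sm_def by auto
  have inS: "i \<in> Sm m" if "B i \<le> m" for i m
  proof -
    have "N j i \<le> (\<Sum>j\<le>i. N j i)" if "j \<le> i" for j
      using that by (intro member_le_sum) auto
    then show ?thesis using that unfolding Sm_def B_def by force
  qed
  have gge: "i \<le> g m" if "B i \<le> m" for i m
    using inS[OF that] finS unfolding g_def by simp
  have gin: "g m \<in> insert 0 (Sm m)" for m
    unfolding g_def using finS by (intro Max_in) auto
  have "\<forall>m. e m > 0" unfolding e_def by simp
  moreover have "finite {m. e m \<ge> \<epsilon>}" if ep: "\<epsilon> > 0" for \<epsilon>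
  proof -
    obtain i :: nat where i: "1 / (real i + 1) < \<epsilon>"
    proof -
      obtain n where "inverse (real (Suc n)) < \<epsilon>" using reals_Archimedean[OF ep] by blast
      then show ?thesis by (intro that[of n]) (simp add: inverse_eq_divide add.commute)
    qed
    have "{m. e m \<ge> \<epsilon>} \<subseteq> {..<B i}"
    proof
      fix m assume "m \<in> {m. e m \<ge> \<epsilon>}"
      then have em: "e m \<ge> \<epsilon>" by simp
      show "m \<in> {..<B i}"
      proof (rule ccontr)
        assume "m \<notin> {..<B i}"
        then have "i \<le> g m" using gge by simp
        then have "e m \<le> 1 / (real i + 1)" unfolding e_def
          by (intro divide_left_mono) auto
        then show False using em i by simp
      qed
    qed
    then show ?thesis by (rule finite_subset) simp
  qed
  moreover have "finite {m. \<not>(\<exists>i. N j i \<le> m \<and> 1/(real i+1) \<le> e m)}" for j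
  proof -
    have "{m. \<not>(\<exists>i. N j i \<le> m \<and> 1/(real i+1) \<le> e m)} \<subseteq> {..<B j}"
    proof
      fix m assume m: "m \<in> {m. \<not>(\<exists>i. N j i \<le> m \<and> 1/(real i+1) \<le> e m)}"
      show "m \<in> {..<B j}"
      proof (rule ccontr)
        assume "m \<notin> {..<B j}"
        then have jS: "j \<in> Sm m" and jg: "j \<le> g m" using inS gge by auto
        have "g m \<in> Sm m" using gin[of m] jS jg by (cases "g m = 0") auto
        then have "N j (g m) \<le> m" using jg unfolding Sm_def by auto
        then show False using m unfolding e_def by auto
      qed
    qed
    then show ?thesis by (rule finite_subset) simp
  qed
  ultimately show ?thesis by blast
qed



lemma sigma_u_imp_qn: "I_sigma_u emptyFin X f \<Longrightarrow> I_qn emptyFin X f"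
proof -
  assume "I_sigma_u emptyFin X f"
  then obtain Xk :: "nat \<Rightarrow> _" where X: "X = (\<Union>j. Xk j)" and u: "\<And>j. I_u emptyFin (Xk j) f"
    unfolding I_sigma_u_def by blast
  define Bad where "Bad k j i = {m. \<exists>x\<in>Xk j. 1/(real i+1) \<le> \<bar>f (k, m) x\<bar>}" for k j i
  have finB: "finite (Bad k j i)" for k j i
  proof -
    have "{n. \<exists>x\<in>Xk j. 1/(real i+1) \<le> \<bar>f n x\<bar>} \<in> emptyFin"
    proof -
      have "(0::real) < 1/(real i+1)" by simp
      then show ?thesis using u[of j] unfolding I_u_def by blast
    qed
    then show ?thesis unfolding emptyFin_iff Bad_def by simp
  qed
  define Nb where "Nb k j i = (SOME n. Bad k j i \<subseteq> {..<n})" for k j i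
  have Nb: "Bad k j i \<subseteq> {..<Nb k j i}" for k j i
  proof -
    have "\<exists>n. Bad k j i \<subseteq> {..<n}" using finB[of k j i] finite_nat_iff_bounded by blast
    then show ?thesis unfolding Nb_def by (rule someI_ex)
  qed
  define P where "P k e \<longleftrightarrow> (\<forall>m. e m > 0) \<and> (\<forall>\<epsilon>>0. finite {m. e m \<ge> \<epsilon>}) \<and>
     (\<forall>j. finite {m. \<not>(\<exists>i. Nb k j i \<le> m \<and> 1/(real i+1) \<le> e m)})" for k and e :: "nat \<Rightarrow> real"
  have exP: "\<exists>e. P k e" for k unfolding P_def by (rule diag)
  define E where "E k = (SOME e. P k e)" for k
  have PE: "P k (E k)" for k unfolding E_def by (rule someI_ex[OF exP])
  have E: "\<And>k m. E k m > 0" "\<And>k \<epsilon>. \<epsilon> > 0 \<Longrightarrow> finite {m. E k m \<ge> \<epsilon>}"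
    "\<And>k j. finite {m. \<not>(\<exists>i. Nb k j i \<le> m \<and> 1/(real i+1) \<le> E k m)}"
    using PE unfolding P_def by blast+
  define e where "e n = E (fst n) (snd n)" for n
  show ?thesis unfolding I_qn_def
  proof (intro exI[of _ e] conjI allI ballI)
    show "0 < e n" for n unfolding e_def using E(1) by simp
    show "Iconv0 emptyFin e" unfolding Iconv0_def emptyFin_iff e_def
      using E(1,2) by (simp add: less_imp_le)
    fix x assume "x \<in> X"
    then obtain j where xj: "x \<in> Xk j" using X by auto
    show "{n. e n \<le> \<bar>f n x\<bar>} \<in> emptyFin" unfolding emptyFin_iff
    proof
      fix k
      have "{m. (k, m) \<in> {n. e n \<le> \<bar>f n x\<bar>}} \<subseteq> {m. \<not>(\<exists>i. Nb k j i \<le> m \<and> 1/(real i+1) \<le> E k m)}"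
      proof (clarsimp simp: e_def)
        fix m i assume a: "E k m \<le> \<bar>f (k, m) x\<bar>" "Nb k j i \<le> m" "1 / (real i + 1) \<le> E k m"
        then have "m \<in> Bad k j i" unfolding Bad_def using xj by force
        then show False using Nb[of k j i] a(2) by auto
      qed
      then show "finite {m. (k, m) \<in> {n. e n \<le> \<bar>f n x\<bar>}}" using E(3) finite_subset by blast
    qed
  qed
qed

lemma normal_sub: "Hausdorff_space (subtopology euclideanreal S) \<and> normal_space (subtopology euclideanreal S)"
  by (simp add: Hausdorff_space_subtopology metrizable_imp_normal_space metrizable_space_subtopology metrizable_space_euclidean)

lemma classes_from_key:
  assumes key: "\<And>f :: nat \<times> nat \<Rightarrow> real \<Rightarrow> real. (\<forall>n. continuous_map (subtopology euclideanreal S) euclideanreal (f n))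
     \<Longrightarrow> I_p emptyFin S f \<Longrightarrow> I_sigma_u emptyFin S f"
  shows "in_class S I_p I_sigma_u emptyFin \<and> in_class S I_p I_qn emptyFin \<and>
            in_class S I_qn I_sigma_u emptyFin"
  unfolding in_class_def using normal_sub key sigma_u_imp_p sigma_u_imp_qn qn_imp_p by metis



lemma eps0_ennreal:
  fixes x :: ennreal
  assumes "\<And>i::nat. x \<le> ennreal (1/(real i+1))"
  shows "x = 0"
proof -
  have "x \<le> 0"
  proof (rule ennreal_le_epsilon)
    fix e :: real assume e: "0 < e"
    obtain n where n: "inverse (real (Suc n)) < e" using reals_Archimedean[OF e] by blast
    have "x \<le> ennreal (1/(real n+1))" by (rule assms)
    also have "\<dots> \<le> ennreal e" using n by (intro ennreal_leI) (simp add: inverse_eq_divide add.commute)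
    finally show "x \<le> 0 + ennreal e" by simp
  qed
  then show ?thesis by simp
qed

lemma basis_enum: "\<exists>b::nat \<Rightarrow> real set. (\<forall>n. open (b n)) \<and> (\<forall>T. open T \<longrightarrow> T = \<Union>{b n | n. b n \<subseteq> T})"
proof -
  obtain B :: "real set set" where B: "countable B" "topological_basis B" using ex_countable_basis by blast
  have ne: "B \<noteq> {}"
  proof
    assume "B = {}"
    then have "\<Union>{} = (UNIV::real set)" using B(2) unfolding topological_basis_def
      by (metis open_UNIV subset_empty)
    then show False by simp
  qed
  define b where "b = from_nat_into B"
  have rb: "range b = B" unfolding b_def using B(1) ne by (simp add: range_from_nat_into)
  show ?thesis
  proof (intro exI[of _ b] conjI allI impI)
    show "open (b n)" for n using B(2) rb unfolding topological_basis_def by blast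
    fix T :: "real set" assume T: "open T"
    then obtain B' where B': "B' \<subseteq> B" "\<Union>B' = T" using B(2) unfolding topological_basis_def by blast
    show "T = \<Union>{b n | n. b n \<subseteq> T}"
    proof
      show "T \<subseteq> \<Union>{b n | n. b n \<subseteq> T}"
      proof
        fix x assume "x \<in> T"
        then obtain c where c: "c \<in> B'" "x \<in> c" using B' by blast
        then obtain n where "c = b n" using B' rb by blast
        then show "x \<in> \<Union>{b n | n. b n \<subseteq> T}" using c B' by blast
      qed
    qed blast
  qed
qed

definition psi :: "(nat \<Rightarrow> real set) \<Rightarrow> nat set \<Rightarrow> real set" where
  "psi b A = (\<Inter>i. \<Union>{b n | n. prod_encode (i, n) \<in> A})"

definition Nul :: "(nat \<Rightarrow> real set) \<Rightarrow> nat set \<Rightarrow> real set" where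
  "Nul b A = (if psi b A \<in> null_sets lebesgue then psi b A else {})"

lemma Nul_null: "Nul b A \<in> null_sets lebesgue"
  unfolding Nul_def by auto

lemma open_lebesgue: "open T \<Longrightarrow> T \<in> sets lebesgue"
  by (simp add: borel_open)

lemma Nul_cover:
  assumes b: "\<forall>T. open T \<longrightarrow> T = \<Union>{b n | n. b n \<subseteq> T}"
    and N: "N \<in> null_sets lebesgue"
  shows "\<exists>A. N \<subseteq> Nul b A"
proof -
  have "\<exists>T. open T \<and> N \<subseteq> T \<and> emeasure lebesgue T \<le> ennreal (1/(real i+1))" for i :: nat
  proof -
    have Ns: "N \<in> sets lebesgue" using N by auto
    obtain T where T: "open T" "N \<subseteq> T" "T - N \<in> lmeasurable"
      "emeasure lebesgue (T - N) < ennreal (1/(real i+1))"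
      using sets_lebesgue_outer_open[OF Ns, of "1/(real i+1)"] by auto
    have "T = N \<union> (T - N)" using T(2) by auto
    then have "emeasure lebesgue T \<le> emeasure lebesgue N + emeasure lebesgue (T - N)"
      using Ns T(3) by (metis emeasure_subadditive fmeasurableD)
    also have "\<dots> = emeasure lebesgue (T - N)" using N by auto
    finally show ?thesis using T by (intro exI[of _ T]) auto
  qed
  then obtain T where T: "\<And>i. open (T i)" "\<And>i. N \<subseteq> T i"
    "\<And>i. emeasure lebesgue (T i) \<le> ennreal (1/(real i+1))" by metis
  define A where "A = {prod_encode (i, n) | i n. b n \<subseteq> T i}"
  have comp: "\<Union>{b n | n. prod_encode (i, n) \<in> A} = T i" for i
  proof -
    have "{b n | n. prod_encode (i, n) \<in> A} = {b n | n. b n \<subseteq> T i}"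
      unfolding A_def by (auto dest: inj_onD[OF inj_prod_encode, of _ "(_,_)", simplified])
    then show ?thesis using b T(1)[of i] by auto
  qed
  have psiA: "psi b A = (\<Inter>i. T i)" unfolding psi_def comp by simp
  have meas: "psi b A \<in> sets lebesgue" unfolding psiA
    using T(1) open_lebesgue by (intro sets.countable_INT) auto
  have "emeasure lebesgue (psi b A) \<le> ennreal (1/(real i+1))" for i
  proof -
    have "emeasure lebesgue (psi b A) \<le> emeasure lebesgue (T i)"
      using T(1) open_lebesgue unfolding psiA by (intro emeasure_mono) auto
    then show ?thesis using T(3)[of i] by (rule order_trans)
  qed
  then have "emeasure lebesgue (psi b A) = 0" by (rule eps0_ennreal)
  then have "psi b A \<in> null_sets lebesgue" using meas by auto
  then have "Nul b A = psi b A" unfolding Nul_def by simp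
  then show ?thesis using T(2) psiA by auto
qed

lemma omega1:
  "\<exists>(W::real set) lt. uncountable W \<and> (\<forall>w\<in>W. countable {v\<in>W. lt v w}) \<and>
     (\<forall>v\<in>W. \<forall>w\<in>W. v \<noteq> w \<longrightarrow> lt v w \<or> lt w v)"
proof -
  obtain r :: "real rel" where r: "well_order_on UNIV r" using well_order_on by blast
  then have wf: "wf (r - Id)" and tot: "\<And>x y. x \<noteq> y \<Longrightarrow> (x, y) \<in> r \<or> (y, x) \<in> r"
    unfolding well_order_on_def linear_order_on_def total_on_def by auto
  define lt where "lt x y = ((x, y) \<in> r - Id)" for x y
  have tot': "\<And>x y. x \<noteq> y \<Longrightarrow> lt x y \<or> lt y x" unfolding lt_def using tot by auto
  define U where "U = {x. uncountable {y. lt y x}}"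
  show ?thesis
  proof (cases "U = {}")
    case True
    then show ?thesis using tot' uncountable_UNIV_real unfolding U_def
      by (intro exI[of _ UNIV] exI[of _ lt]) auto
  next
    case False
    then obtain z where z: "z \<in> U" and zmin: "\<And>y. (y, z) \<in> r - Id \<Longrightarrow> y \<notin> U"
      using wfE_min'[OF wf] by metis
    define W where "W = {y. lt y z}"
    have "uncountable W" using z unfolding U_def W_def by simp
    moreover have "countable {v\<in>W. lt v w}" if "w \<in> W" for w
    proof -
      have "w \<notin> U" using zmin that unfolding W_def lt_def by auto
      then have "countable {y. lt y w}" unfolding U_def by simp
      then show ?thesis by (rule countable_subset[rotated]) auto
    qed
    ultimately show ?thesis using tot' by (intro exI[of _ W] exI[of _ lt]) auto
  qed
qed

lemma lebesgue_UNIV_not_null: "(UNIV::real set) \<notin> null_sets lebesgue"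
proof
  assume "(UNIV::real set) \<in> null_sets lebesgue"
  then have "emeasure lebesgue (UNIV::real set) = 0" by auto
  moreover have "emeasure lebesgue (UNIV::real set) = emeasure lborel UNIV"
    using emeasure_completion[of UNIV lborel] by simp
  ultimately show False by simp
qed

lemma CH_sierpinski: "CH \<Longrightarrow> \<exists>S. sierpinski_set S"
proof -
  assume ch: CH
  obtain W :: "real set" and lt :: "real \<Rightarrow> real \<Rightarrow> bool" where W0: "uncountable W \<and> (\<forall>w\<in>W. countable {v\<in>W. lt v w}) \<and>
     (\<forall>v\<in>W. \<forall>w\<in>W. v \<noteq> w \<longrightarrow> lt v w \<or> lt w v)"
    using omega1 by (elim exE) (erule that)
  have W: "uncountable W" "\<And>w. w\<in>W \<Longrightarrow> countable {v\<in>W. lt v w}"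
    "\<And>v w. v\<in>W \<Longrightarrow> w\<in>W \<Longrightarrow> v \<noteq> w \<Longrightarrow> lt v w \<or> lt w v"
    using W0 by auto
  have "W \<approx> (UNIV::real set)" using ch W(1) unfolding CH_def by blast
  then have "W \<approx> (UNIV::nat set set)"
    using nat_sets_eqpoll_reals eqpoll_sym eqpoll_trans by blast
  then obtain h where h: "bij_betw h W (UNIV::nat set set)" unfolding eqpoll_def by blast
  then have hW: "h ` W = UNIV" unfolding bij_betw_def by blast
  have hsurj: "\<exists>v\<in>W. h v = A" for A
  proof -
    have "A \<in> h ` W" using hW by simp
    then show ?thesis by blast
  qed
  obtain b :: "nat \<Rightarrow> real set" where b: "\<forall>T. open T \<longrightarrow> T = \<Union>{b n | n. b n \<subseteq> T}"
    using basis_enum by blast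
  define below where "below w = {v\<in>W. lt v w \<or> v = w}" for w
  have cb: "countable (below w)" if "w \<in> W" for w
  proof -
    have "below w = insert w {v\<in>W. lt v w}" using that unfolding below_def by auto
    then show ?thesis using W(2)[OF that] by simp
  qed
  define Big where "Big w = (\<Union>v\<in>below w. Nul b (h v))" for w
  have Bignull: "Big w \<in> null_sets lebesgue" if "w \<in> W" for w
    unfolding Big_def using cb[OF that] Nul_null by (intro null_sets_UN') auto
  have ex: "\<exists>x. x \<notin> Big w" if "w \<in> W" for w
    using Bignull[OF that] lebesgue_UNIV_not_null by (metis UNIV_eq_I)
  define x where "x w = (SOME x. x \<notin> Big w)" for w
  have xw: "x w \<notin> Nul b (h v)" if "w \<in> W" "v \<in> below w" for v w
    using someI_ex[OF ex[OF that(1)]] that(2) unfolding x_def Big_def by blast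
  have key: "x ` W \<inter> Nul b (h v0) \<subseteq> x ` below v0" if "v0 \<in> W" for v0
  proof
    fix y assume "y \<in> x ` W \<inter> Nul b (h v0)"
    then obtain w where w: "w \<in> W" "y = x w" "x w \<in> Nul b (h v0)" by blast
    have "w \<in> below v0"
    proof (rule ccontr)
      assume "w \<notin> below v0"
      then have "lt v0 w" using W(3)[OF that w(1)] w(1) unfolding below_def by auto
      then have "v0 \<in> below w" unfolding below_def using that by simp
      then show False using xw[OF w(1)] w(3) by blast
    qed
    then show "y \<in> x ` below v0" using w by blast
  qed
  have "sierpinski_set (x ` W)"
    unfolding sierpinski_set_def
  proof (intro conjI ballI)
    show "uncountable (x ` W)"
    proof
      assume c: "countable (x ` W)"
      then have "x ` W \<in> null_sets lebesgue"
        using countable_imp_null_set_lborel null_sets_completionI by blast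
      then obtain A where "x ` W \<subseteq> Nul b A" using Nul_cover[OF b] by blast
      then obtain v0 where v0: "v0 \<in> W" "x ` W \<subseteq> Nul b (h v0)" using hsurj by metis
      have "W \<subseteq> below v0 \<union> {w\<in>W. lt v0 w}" unfolding below_def using W(3)[OF v0(1)] by auto
      moreover have "{w\<in>W. lt v0 w} = {}"
      proof -
        have "w \<notin> W" if "lt v0 w" for w
        proof
          assume "w \<in> W"
          then have "x w \<notin> Nul b (h v0)" using xw[of w v0] v0(1) that unfolding below_def by simp
          then show False using v0(2) \<open>w \<in> W\<close> by blast
        qed
        then show ?thesis by blast
      qed
      ultimately have "W \<subseteq> below v0" by blast
      then have "countable W" using cb[OF v0(1)] by (rule countable_subset)
      then show False using W(1) by simp
    qed
    fix N :: "real set" assume N: "N \<in> null_sets lebesgue"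
    then obtain A where "N \<subseteq> Nul b A" using Nul_cover[OF b] by blast
    then obtain v0 where v0: "v0 \<in> W" "N \<subseteq> Nul b (h v0)" using hsurj by metis
    have sub: "x ` W \<inter> N \<subseteq> x ` below v0" using key[OF v0(1)] v0(2) by blast
    have "countable (x ` below v0)" using cb[OF v0(1)] by (rule countable_image)
    then show "countable (x ` W \<inter> N)" by (rule countable_subset[OF sub])
  qed
  then show ?thesis by blast
qed



lemma sierp_key:
  fixes f :: "nat \<times> nat \<Rightarrow> real \<Rightarrow> real"
  assumes S: "\<forall>N\<in>null_sets lebesgue. countable (S \<inter> N)"
    and cont: "\<forall>n. continuous_map (subtopology euclideanreal S) euclideanreal (f n)"
    and p: "I_p emptyFin S f"
  shows "I_sigma_u emptyFin S f"
proof -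
  define rw where "rw q = fst (prod_decode q)" for q
  define ep where "ep q = 1 / (real (snd (prod_decode q)) + 1)" for q
  have pfin: "finite {m. \<epsilon> \<le> \<bar>f (k, m) x\<bar>}" if "x \<in> S" "\<epsilon> > 0" for x k \<epsilon>
    using p that unfolding I_p_def Iconv0_def emptyFin_iff by auto
  have exT: "\<exists>T. closed T \<and> S \<inter> T = {x\<in>S. \<bar>f n x\<bar> \<le> c}" for n c
  proof -
    have "closedin (top_of_set S) {x \<in> topspace (top_of_set S). f n x \<in> {-c..c}}"
      using cont closed_closedin[of "{-c..c}"] closed_atLeastAtMost[of "-c" c]
      by (intro closedin_continuous_map_preimage[of _ euclideanreal]) blast+
    then obtain T where "closed T" "{x \<in> topspace (top_of_set S). f n x \<in> {-c..c}} = S \<inter> T"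
      unfolding closedin_closed by (elim exE conjE) (rule that, assumption+)
    moreover have "{x \<in> topspace (top_of_set S). f n x \<in> {-c..c}} = {x\<in>S. \<bar>f n x\<bar> \<le> c}"
      by (auto simp: abs_le_iff)
    ultimately show ?thesis by (intro exI[of _ T]) simp
  qed
  define T where "T q m = (SOME T. closed T \<and> S \<inter> T = {x\<in>S. \<bar>f (rw q, m) x\<bar> \<le> ep q})" for q m
  have T: "\<And>q m. closed (T q m)" "\<And>q m. S \<inter> T q m = {x\<in>S. \<bar>f (rw q, m) x\<bar> \<le> ep q}"
    unfolding T_def using someI_ex[OF exT] by blast+
  define Bp where "Bp q M = (\<Inter>m\<in>{M..}. T q m)" for q M
  define G where "G q = (\<Union>M. Bp q M)" for q
  have SG: "S \<subseteq> G q" for q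
  proof
    fix x assume x: "x \<in> S"
    have "ep q > 0" unfolding ep_def by simp
    then have "finite {m. ep q \<le> \<bar>f (rw q, m) x\<bar>}" using pfin x by blast
    then obtain M where M: "{m. ep q \<le> \<bar>f (rw q, m) x\<bar>} \<subseteq> {..<M}" using finite_nat_iff_bounded by blast
    have "x \<in> T q m" if "m \<ge> M" for m
    proof -
      have "\<bar>f (rw q, m) x\<bar> \<le> ep q"
      proof (rule ccontr)
        assume "\<not> \<bar>f (rw q, m) x\<bar> \<le> ep q"
        then have "m \<in> {m. ep q \<le> \<bar>f (rw q, m) x\<bar>}" by simp
        then have "m \<in> {..<M}" using M by (rule subsetD[rotated])
        then show False using that by simp
      qed
      then show ?thesis using T(2)[of q m] x by blast
    qed
    then have "x \<in> Bp q M" unfolding Bp_def by blast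
    then show "x \<in> G q" unfolding G_def by blast
  qed
  have Bp_mono: "Bp q M \<subseteq> Bp q M'" if "M \<le> M'" for q M M'
    using that unfolding Bp_def by auto
  have Bp_sets: "Bp q M \<in> sets lborel" for q M
  proof -
    have "closed (Bp q M)" unfolding Bp_def using T(1) by (intro closed_INT) auto
    then show ?thesis unfolding sets_lborel by (rule borel_closed)
  qed
  have G_sets: "G q \<in> sets lborel" for q
    unfolding G_def using Bp_sets by auto
  have exM: "\<exists>M. emeasure lborel ({-real L..real L} \<inter> G q - Bp q M) < ennreal \<delta>" if "\<delta> > 0" for L q \<delta>
  proof -
    define A where "A M = {-real L..real L} \<inter> G q - Bp q M" for M
    have rA: "range A \<subseteq> sets lborel" unfolding A_def using Bp_sets G_sets by auto
    have aA: "antimono A" unfolding A_def using Bp_mono by (intro antimonoI) blast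
    have fA: "emeasure lborel (A M) \<noteq> \<infinity>" for M
    proof -
      have "emeasure lborel (A M) \<le> emeasure lborel {-real L..real L}"
        unfolding A_def by (intro emeasure_mono) auto
      also have "\<dots> = ennreal (2 * real L)" by (subst emeasure_lborel_Icc) auto
      finally have le: "emeasure lborel (A M) \<le> ennreal (2 * real L)" .
      have "emeasure lborel (A M) < top" using le ennreal_less_top by (rule le_less_trans)
      then show ?thesis by auto
    qed
    have iA: "(\<Inter>M. A M) = {}" unfolding A_def G_def by auto
    have "(\<lambda>M. emeasure lborel (A M)) \<longlonglongrightarrow> 0"
      using Lim_emeasure_decseq[OF rA aA fA] iA by simp
    moreover have "(0::ennreal) < ennreal \<delta>" using that by simp
    ultimately have "eventually (\<lambda>M. emeasure lborel (A M) < ennreal \<delta>) sequentially"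
      by (rule order_tendstoD(2))
    then show ?thesis unfolding A_def eventually_sequentially by blast
  qed
  define c where "c i q = 1/(real i+1) * (1/2)^(Suc q)" for i q :: nat
  have cpos: "c i q > 0" for i q unfolding c_def by simp
  define M where "M L i q = (SOME M. emeasure lborel ({-real L..real L} \<inter> G q - Bp q M) < ennreal (c i q))" for L i q
  have M: "\<And>L i q. emeasure lborel ({-real L..real L} \<inter> G q - Bp q (M L i q)) < ennreal (c i q)"
    unfolding M_def using someI_ex[OF exM[OF cpos]] by blast
  define Bad where "Bad L i = (\<Union>q. {-real L..real L} \<inter> G q - Bp q (M L i q))" for L i
  have Bad_sets: "Bad L i \<in> sets lborel" for L i
    unfolding Bad_def using Bp_sets G_sets by auto
  have Bad_meas: "emeasure lborel (Bad L i) \<le> ennreal (1/(real i+1))" for L i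
  proof -
    have "emeasure lborel (Bad L i) \<le> (\<Sum>q. emeasure lborel ({-real L..real L} \<inter> G q - Bp q (M L i q)))"
      unfolding Bad_def using Bp_sets G_sets by (intro emeasure_subadditive_countably) auto
    also have "\<dots> \<le> (\<Sum>q. ennreal (c i q))"
      using M by (intro suminf_le) (auto intro: less_imp_le)
    also have "\<dots> = ennreal (1/(real i+1))"
    proof -
      have "c i sums (1/(real i+1) * 1)" unfolding c_def by (intro sums_mult power_half_series)
      then show ?thesis using cpos by (subst suminf_ennreal_eq[of _ "1/(real i+1)"]) (auto intro: less_imp_le)
    qed
    finally show ?thesis .
  qed
  define Z where "Z = (\<Union>L. \<Inter>i. Bad L i)"
  have "(\<Inter>i. Bad L i) \<in> null_sets lborel" for L
  proof -
    have ms: "(\<Inter>i. Bad L i) \<in> sets lborel" using Bad_sets by auto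
    have "emeasure lborel (\<Inter>i. Bad L i) \<le> ennreal (1/(real i+1))" for i
      using emeasure_mono[of "\<Inter>i. Bad L i" "Bad L i" lborel] Bad_sets Bad_meas[of L i] by force
    then have "emeasure lborel (\<Inter>i. Bad L i) = 0" by (rule eps0_ennreal)
    then show ?thesis using ms by auto
  qed
  then have "Z \<in> null_sets lborel" unfolding Z_def by (intro null_sets_UN)
  then have "Z \<in> null_sets lebesgue" by (rule null_sets_completionI)
  then have cZ: "countable (S \<inter> Z)" using S by blast
  define P1 where "P1 r = S \<inter> {-real (fst (prod_decode r))..real (fst (prod_decode r))} \<inter>
     (\<Inter>q. Bp q (M (fst (prod_decode r)) (snd (prod_decode r)) q))" for r
  define P2 where "P2 r = (if S \<inter> Z = {} then {} else {from_nat_into (S \<inter> Z) r})" for r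
  define Xk where "Xk n = (if even n then P1 (n div 2) else P2 (n div 2))" for n
  have P2S: "P2 r \<subseteq> S" for r unfolding P2_def using from_nat_into[of "S \<inter> Z"] by auto
  have cover: "S = (\<Union>n. Xk n)"
  proof
    show "(\<Union>n. Xk n) \<subseteq> S" unfolding Xk_def using P2S by (auto simp: P1_def)
    show "S \<subseteq> (\<Union>n. Xk n)"
    proof
      fix x assume x: "x \<in> S"
      show "x \<in> (\<Union>n. Xk n)"
      proof (cases "x \<in> Z")
        case True
        then obtain r where r: "from_nat_into (S \<inter> Z) r = x" using from_nat_into_surj[OF cZ] x by blast
        have "Xk (2 * r + 1) = P2 r" unfolding Xk_def by simp
        then have "x \<in> Xk (2 * r + 1)" unfolding P2_def using r x True by auto
        then show ?thesis by blast
      next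
        case False
        define L where "L = nat \<lceil>\<bar>x\<bar>\<rceil>"
        have xL: "x \<in> {-real L..real L}" unfolding L_def by (auto, linarith+)
        then obtain i where i: "x \<notin> Bad L i" using False unfolding Z_def by blast
        have "x \<in> Bp q (M L i q)" for q using i xL SG x unfolding Bad_def by blast
        then have "x \<in> P1 (prod_encode (L, i))" unfolding P1_def using x xL by simp
        moreover have "Xk (2 * prod_encode (L, i)) = P1 (prod_encode (L, i))" unfolding Xk_def by simp
        ultimately show ?thesis by blast
      qed
    qed
  qed
  have uP1: "I_u emptyFin (P1 r) f" for r
    unfolding I_u_def emptyFin_iff
  proof (intro allI impI)
    fix \<epsilon> :: real and k assume e: "0 < \<epsilon>"
    obtain j where j: "inverse (real (Suc j)) < \<epsilon>" using reals_Archimedean[OF e] by blast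
    define q0 where "q0 = prod_encode (k, j)"
    have rq: "rw q0 = k" "ep q0 = inverse (real (Suc j))" unfolding rw_def ep_def q0_def
      by (auto simp: inverse_eq_divide add.commute)
    define M0 where "M0 = M (fst (prod_decode r)) (snd (prod_decode r)) q0"
    have "{m. (k, m) \<in> {n. \<exists>x\<in>P1 r. \<epsilon> \<le> \<bar>f n x\<bar>}} \<subseteq> {..<M0}"
    proof (rule subsetI, rule ccontr)
      fix m assume m: "m \<in> {m. (k, m) \<in> {n. \<exists>x\<in>P1 r. \<epsilon> \<le> \<bar>f n x\<bar>}}" "m \<notin> {..<M0}"
      then obtain x where x: "x \<in> P1 r" "\<epsilon> \<le> \<bar>f (k, m) x\<bar>" by auto
      have "x \<in> Bp q0 M0" "x \<in> S" using x(1) unfolding P1_def M0_def by auto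
      then have "x \<in> S \<inter> T q0 m" using m(2) unfolding Bp_def by auto
      then have "\<bar>f (k, m) x\<bar> \<le> inverse (real (Suc j))" using T(2)[of q0 m] rq by auto
      then show False using x(2) j by simp
    qed
    then show "finite {m. (k, m) \<in> {n. \<exists>x\<in>P1 r. \<epsilon> \<le> \<bar>f n x\<bar>}}" by (rule finite_subset) simp
  qed
  have uP2: "I_u emptyFin (P2 r) f" for r
    unfolding I_u_def emptyFin_iff
  proof (intro allI impI)
    fix \<epsilon> :: real and k assume e: "0 < \<epsilon>"
    show "finite {m. (k, m) \<in> {n. \<exists>x\<in>P2 r. \<epsilon> \<le> \<bar>f n x\<bar>}}"
    proof (cases "S \<inter> Z = {}")
      case True then show ?thesis unfolding P2_def by simp
    next
      case False
      have "from_nat_into (S \<inter> Z) r \<in> S \<inter> Z" by (rule from_nat_into[OF False])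
      then have y: "from_nat_into (S \<inter> Z) r \<in> S" by (rule IntD1)
      show ?thesis unfolding P2_def using False pfin[OF y e, of k] by simp
    qed
  qed
  have "I_u emptyFin (Xk n) f" for n unfolding Xk_def using uP1 uP2 by simp
  then show ?thesis unfolding I_sigma_u_def using cover by blast
qed


theorem theorem6p6:
  shows "(\<forall>S. sierpinski_set S \<longrightarrow>
            in_class S I_p I_sigma_u emptyFin \<and> in_class S I_p I_qn emptyFin \<and>
            in_class S I_qn I_sigma_u emptyFin)
       \<and> (CH \<longrightarrow> (\<exists>X :: real set. uncountable X \<and>
            in_class X I_p I_sigma_u emptyFin \<and> in_class X I_p I_qn emptyFin \<and>
            in_class X I_qn I_sigma_u emptyFin))"
proof -
  have P1: "in_class S I_p I_sigma_u emptyFin \<and> in_class S I_p I_qn emptyFin \<and>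
            in_class S I_qn I_sigma_u emptyFin" if "sierpinski_set S" for S
  proof (rule classes_from_key)
    fix f :: "nat \<times> nat \<Rightarrow> real \<Rightarrow> real"
    assume "\<forall>n. continuous_map (top_of_set S) euclideanreal (f n)" "I_p emptyFin S f"
    then show "I_sigma_u emptyFin S f"
      using that unfolding sierpinski_set_def by (intro sierp_key) auto
  qed
  moreover have "CH \<longrightarrow> (\<exists>X :: real set. uncountable X \<and>
            in_class X I_p I_sigma_u emptyFin \<and> in_class X I_p I_qn emptyFin \<and>
            in_class X I_qn I_sigma_u emptyFin)"
  proof
    assume CH
    then obtain S where "sierpinski_set S" using CH_sierpinski by blast
    then show "\<exists>X :: real set. uncountable X \<and>
            in_class X I_p I_sigma_u emptyFin \<and> in_class X I_p I_qn emptyFin \<and>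
            in_class X I_qn I_sigma_u emptyFin"
      using P1 unfolding sierpinski_set_def by blast
  qed
  ultimately show ?thesis by blast
qed

end
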